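(* Let $C\subseteq 2^X$ be an ample class and let $C'\subseteq C$ be a subclass whose graph $G(C')$ is connected. Then $C'$ is convex in $C$ if and only if $C'$ is locally convex in $C$.
   Context: A cube of $2^X$ is $\{T\cup Z:Z\subseteq Y\}$ with $Y\subseteq X$, $T\subseteq X\setminus Y$ ($Y$ its support). $Y$ is shattered by $C$ if $\{c\cap Y:c\in C\}=2^Y$; $C$ is ample if every set shattered by $C$ is the support of a cube contained in $C$. $G(C)$ is the graph on $C$ joining $c,c'$ with $|c\Delta c'|=1$. For $c,c'\subseteq X$, $B(c,c')$ is the smallest cube of $2^X$ containing $c$ and $c'$ (the set of $t$ with $c\cap c'\subseteq t\subseteq c\cup c'$). For $C'\subseteq C$: $C'$ is convex in $C$ if $B(c,c')\cap C\subseteq C'$ for all $c,c'\in C'$; $C'$ is locally convex in $C$ if $B(c,c')\cap C\subseteq C'$ for all $c,c'\in C'$ with $|c\Delta c'|=2$. *)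

theory Defs
  imports Main
begin

definition cube :: "'a set \<Rightarrow> 'a set \<Rightarrow> 'a set set" where
  "cube T Y = {T \<union> Z | Z. Z \<subseteq> Y}"

definition shatters :: "'a set set \<Rightarrow> 'a set \<Rightarrow> bool" where
  "shatters C Y \<longleftrightarrow> {c \<inter> Y | c. c \<in> C} = Pow Y"

definition ample :: "'a set \<Rightarrow> 'a set set \<Rightarrow> bool" where
  "ample X C \<longleftrightarrow> C \<subseteq> Pow X \<and>
     (\<forall>Y. Y \<subseteq> X \<and> shatters C Y \<longrightarrow>
        (\<exists>T. T \<subseteq> X - Y \<and> cube T Y \<subseteq> C))"

definition adj :: "'a set set \<Rightarrow> 'a set \<Rightarrow> 'a set \<Rightarrow> bool" where
  "adj C c c' \<longleftrightarrow> c \<in> C \<and> c' \<in> C \<and> card (c - c' \<union> (c' - c)) = 1"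

definition graph_connected :: "'a set set \<Rightarrow> bool" where
  "graph_connected C \<longleftrightarrow> (\<forall>c\<in>C. \<forall>c'\<in>C. (adj C)\<^sup>*\<^sup>* c c')"

text \<open>Smallest cube of 2^X containing c and c'.\<close>
definition B :: "'a set \<Rightarrow> 'a set \<Rightarrow> 'a set set" where
  "B c c' = {t. c \<inter> c' \<subseteq> t \<and> t \<subseteq> c \<union> c'}"

definition convex_in :: "'a set set \<Rightarrow> 'a set set \<Rightarrow> bool" where
  "convex_in C' C \<longleftrightarrow> (\<forall>c\<in>C'. \<forall>c'\<in>C'. B c c' \<inter> C \<subseteq> C')"

definition locally_convex_in :: "'a set set \<Rightarrow> 'a set set \<Rightarrow> bool" where
  "locally_convex_in C' C \<longleftrightarrow>
     (\<forall>c\<in>C'. \<forall>c'\<in>C'. card (c - c' \<union> (c' - c)) = 2 \<longrightarrow> B c c' \<inter> C \<subseteq> C')"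

end

theory Submission
  imports Defs
begin

definition fl :: "'a \<Rightarrow> 'a set \<Rightarrow> 'a set" where
  "fl e p = (if e \<in> p then p - {e} else insert e p)"

lemma sd_single: "(p - q \<union> (q - p) = {f}) \<longleftrightarrow> q = fl f p"
proof
  assume h: "p - q \<union> (q - p) = {f}"
  show "q = fl f p"
  proof (rule set_eqI)
    fix x show "x \<in> q \<longleftrightarrow> x \<in> fl f p"
      using h unfolding fl_def set_eq_iff by (cases "x = f") auto
  qed
qed (auto simp: fl_def)

lemma adj_fl: "adj A p q \<longleftrightarrow> p \<in> A \<and> q \<in> A \<and> (\<exists>f. q = fl f p)"
  unfolding adj_def One_nat_def card_1_singleton_iff sd_single by blast

lemma adj_sym: "adj A p q \<Longrightarrow> adj A q p"
  by (auto simp: adj_def Un_commute)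

lemma rt_sym: "(adj A)\<^sup>*\<^sup>* p q \<Longrightarrow> (adj A)\<^sup>*\<^sup>* q p"
  by (induction rule: rtranclp_induct) (auto intro: converse_rtranclp_into_rtranclp adj_sym)

lemma adj_mono: "A \<subseteq> A' \<Longrightarrow> (adj A)\<^sup>*\<^sup>* p q \<Longrightarrow> (adj A')\<^sup>*\<^sup>* p q"
proof -
  assume "A \<subseteq> A'"
  then have "adj A \<le> adj A'" by (auto simp: adj_def)
  then show "(adj A)\<^sup>*\<^sup>* p q \<Longrightarrow> (adj A')\<^sup>*\<^sup>* p q" using rtranclp_mono by blast
qed


lemma shattersD: "shatters C Y \<Longrightarrow> W \<subseteq> Y \<Longrightarrow> \<exists>c\<in>C. c \<inter> Y = W"
proof -
  assume a: "shatters C Y" "W \<subseteq> Y"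
  have "W \<in> Pow Y" using a(2) by simp
  also have "Pow Y = {c \<inter> Y |c. c \<in> C}" using a(1) unfolding shatters_def by simp
  finally show ?thesis by blast
qed

lemma shattersI: "(\<And>W. W \<subseteq> Y \<Longrightarrow> \<exists>c\<in>C. c \<inter> Y = W) \<Longrightarrow> shatters C Y"
  unfolding shatters_def by auto

lemma not_shattersE: "\<not> shatters C Y \<Longrightarrow> (\<And>W. W \<subseteq> Y \<Longrightarrow> \<forall>c\<in>C. c \<inter> Y \<noteq> W \<Longrightarrow> P) \<Longrightarrow> P"
proof (rule ccontr)
  assume ns: "\<not> shatters C Y" and h: "\<And>W. W \<subseteq> Y \<Longrightarrow> \<forall>c\<in>C. c \<inter> Y \<noteq> W \<Longrightarrow> P" and nP: "\<not> P"
  have "shatters C Y"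
  proof (rule shattersI)
    fix W assume W: "W \<subseteq> Y"
    show "\<exists>c\<in>C. c \<inter> Y = W"
    proof (rule ccontr)
      assume "\<not> (\<exists>c\<in>C. c \<inter> Y = W)"
      then have "\<forall>c\<in>C. c \<inter> Y \<noteq> W" by blast
      then show False using h[OF W] nP by blast
    qed
  qed
  then show False using ns by contradiction
qed

lemma shatters_mono: "shatters C Y \<Longrightarrow> C \<subseteq> C' \<Longrightarrow> shatters C' Y"
proof -
  assume a: "shatters C Y" "C \<subseteq> C'"
  show ?thesis
  proof (rule shattersI)
    fix W assume "W \<subseteq> Y"
    then obtain c where "c \<in> C" "c \<inter> Y = W" using shattersD[OF a(1)] by blast
    then show "\<exists>c\<in>C'. c \<inter> Y = W" using a(2) by blast
  qed
qed

lemma ampleD: "ample X C \<Longrightarrow> Y \<subseteq> X \<Longrightarrow> shatters C Y \<Longrightarrow> \<exists>T. T \<subseteq> X - Y \<and> cube T Y \<subseteq> C"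
  unfolding ample_def by blast

lemma ampleD2: "ample X C \<Longrightarrow> C \<subseteq> Pow X"
  unfolding ample_def by blast

lemma ampleI: "C \<subseteq> Pow X \<Longrightarrow> (\<And>Y. Y \<subseteq> X \<Longrightarrow> shatters C Y \<Longrightarrow> \<exists>T. T \<subseteq> X - Y \<and> cube T Y \<subseteq> C) \<Longrightarrow> ample X C"
  unfolding ample_def by blast

lemma cube_mem: "Z \<subseteq> Y \<Longrightarrow> T \<union> Z \<in> cube T Y"
  unfolding cube_def by blast

lemma cubeE: "s \<in> cube T Y \<Longrightarrow> (\<And>Z. Z \<subseteq> Y \<Longrightarrow> s = T \<union> Z \<Longrightarrow> P) \<Longrightarrow> P"
  unfolding cube_def by blast

lemma shatters_fixed:
  assumes "shatters H Y" "x \<in> Y" "\<forall>h\<in>H. (x \<in> h) = b" shows False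
proof -
  obtain h where "h \<in> H" "h \<inter> Y = {x}" using shattersD[OF assms(1), of "{x}"] assms(2) by auto
  moreover obtain h' where "h' \<in> H" "h' \<inter> Y = {}" using shattersD[OF assms(1), of "{}"] by auto
  ultimately have "x \<in> h" "x \<notin> h'" "(x \<in> h) = b" "(x \<in> h') = b" using assms(2,3) by auto
  then show False by simp
qed



lemma half_ample:
  assumes amp: "ample X C" and xX: "x \<in> X"
  shows "ample X {s\<in>C. (x\<in>s) = b}" (is "ample X ?H")
proof (rule ampleI)
  show "?H \<subseteq> Pow X" using ampleD2[OF amp] by auto
next
  fix Y assume Y: "Y \<subseteq> X" "shatters ?H Y"
  have xY: "x \<notin> Y"
  proof
    assume "x \<in> Y"
    moreover have "\<forall>h\<in>?H. (x\<in>h) = b" by simp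
    ultimately show False using shatters_fixed[OF Y(2)] by blast
  qed
  have "?H \<subseteq> C" by blast
  then have "shatters C Y" using shatters_mono[OF Y(2)] by blast
  then obtain T where T: "T \<subseteq> X - Y" "cube T Y \<subseteq> C" using ampleD[OF amp Y(1)] by blast
  show "\<exists>T. T \<subseteq> X - Y \<and> cube T Y \<subseteq> ?H"
  proof (cases "shatters C (insert x Y)")
    case True
    then obtain T' where T': "T' \<subseteq> X - insert x Y" "cube T' (insert x Y) \<subseteq> C"
      using ampleD[OF amp _ True] Y(1) xX by blast
    define T'' where "T'' = (if b then insert x T' else T')"
    have "T'' \<subseteq> X - Y" by (cases b) (use T' xX xY in \<open>auto simp: T''_def\<close>)
    moreover have "cube T'' Y \<subseteq> ?H"
    proof
      fix s assume "s \<in> cube T'' Y"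
      then obtain Z where Z: "Z \<subseteq> Y" "s = T'' \<union> Z" by (rule cubeE)
      define Z' where "Z' = (if b then insert x Z else Z)"
      have "s = T' \<union> Z'" "Z' \<subseteq> insert x Y" by (cases b) (use Z in \<open>auto simp: Z'_def T''_def\<close>)
      then have "s \<in> C" using subsetD[OF T'(2) cube_mem[of Z' "insert x Y" T']] by simp
      moreover have "(x \<in> s) = b" by (cases b) (use Z T' xY in \<open>auto simp: T''_def\<close>)
      ultimately show "s \<in> ?H" by auto
    qed
    ultimately show ?thesis by (intro exI[of _ T''] conjI)
  next
    case False
    then obtain W where W: "W \<subseteq> insert x Y" "\<forall>c\<in>C. c \<inter> insert x Y \<noteq> W"
      by (rule not_shattersE)
    have xW: "(x \<in> W) \<noteq> b"
    proof
      assume a: "(x \<in> W) = b"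
      have "W - {x} \<subseteq> Y" using W by auto
      then obtain h where h: "h \<in> ?H" "h \<inter> Y = W - {x}" using shattersD[OF Y(2)] by blast
      then have "h \<inter> insert x Y = W" by (cases "x \<in> W") (use h a W in auto)
      then show False using W(2) h(1) by blast
    qed
    have xT: "(x \<in> T) = b"
    proof (rule ccontr)
      assume a: "(x \<in> T) \<noteq> b"
      have "T \<union> (W \<inter> Y) \<in> C" using T cube_mem[of "W \<inter> Y" Y T] by blast
      moreover have "x \<in> T \<longleftrightarrow> x \<in> W" by (cases b) (use a xW in auto)
      then have "(T \<union> (W \<inter> Y)) \<inter> insert x Y = W" by (cases "x \<in> W") (use T(1) W(1) in auto)
      ultimately show False using W(2) by blast
    qed
    have "cube T Y \<subseteq> ?H"
    proof
      fix s assume s: "s \<in> cube T Y"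
      then obtain Z where Z: "Z \<subseteq> Y" "s = T \<union> Z" by (rule cubeE)
      have "(x \<in> s) = b" using Z xT xY by auto
      then show "s \<in> ?H" using s T by blast
    qed
    then show ?thesis using T by blast
  qed
qed


lemma red_ample:
  assumes amp: "ample X C" and xX: "x \<in> X"
  shows "ample X {p\<in>C. (x\<in>p) = b \<and> fl x p \<in> C}" (is "ample X ?H")
proof (rule ampleI)
  show "?H \<subseteq> Pow X" using ampleD2[OF amp] by auto
next
  fix Y assume Y: "Y \<subseteq> X" "shatters ?H Y"
  have xY: "x \<notin> Y"
  proof
    assume "x \<in> Y"
    moreover have "\<forall>h\<in>?H. (x\<in>h) = b" by simp
    ultimately show False using shatters_fixed[OF Y(2)] by blast
  qed
  have shI: "shatters C (insert x Y)"
  proof (rule shattersI)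
    fix W assume W: "W \<subseteq> insert x Y"
    have "W - {x} \<subseteq> Y" using W by auto
    then obtain h where h: "h \<in> ?H" "h \<inter> Y = W - {x}" using shattersD[OF Y(2)] by blast
    show "\<exists>c\<in>C. c \<inter> insert x Y = W"
    proof (cases "(x \<in> W) = b")
      case True
      then have "h \<inter> insert x Y = W" by (cases "x \<in> W") (use True h W in auto)
      then show ?thesis using h by blast
    next
      case False
      have xh: "(x \<in> h) = b" using h(1) by simp
      have "fl x h \<inter> insert x Y = W"
      proof (cases "x \<in> W")
        case True
        then have "x \<notin> h" using xh \<open>(x \<in> W) \<noteq> b\<close> by simp
        then have "fl x h = insert x h" by (simp add: fl_def)
        then show ?thesis using True h(2) W by auto
      next
        case False
        then have "x \<in> h" using xh \<open>(x \<in> W) \<noteq> b\<close> by simp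
        then have "fl x h = h - {x}" by (simp add: fl_def)
        then show ?thesis using False h(2) W by auto
      qed
      then show ?thesis using h by blast
    qed
  qed
  have iX: "insert x Y \<subseteq> X" using Y(1) xX by blast
  obtain T' where T': "T' \<subseteq> X - insert x Y" "cube T' (insert x Y) \<subseteq> C"
    using ampleD[OF amp iX shI] by blast
  define T'' where "T'' = (if b then insert x T' else T')"
  have "T'' \<subseteq> X - Y" by (cases b) (use T' xX xY in \<open>auto simp: T''_def\<close>)
  moreover have "cube T'' Y \<subseteq> ?H"
  proof
    fix s assume "s \<in> cube T'' Y"
    then obtain Z where Z: "Z \<subseteq> Y" "s = T'' \<union> Z" by (rule cubeE)
    define Z' where "Z' = (if b then insert x Z else Z)"
    define Z'' where "Z'' = (if b then Z else insert x Z)"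
    have "s = T' \<union> Z'" "Z' \<subseteq> insert x Y" by (cases b) (use Z in \<open>auto simp: Z'_def T''_def\<close>)
    then have "s \<in> C" using subsetD[OF T'(2) cube_mem[of Z' "insert x Y" T']] by simp
    moreover have xs: "(x \<in> s) = b" by (cases b) (use Z T' xY in \<open>auto simp: T''_def\<close>)
    have "fl x s = T' \<union> Z''"
    proof (cases b)
      case True
      then have "x \<in> s" using xs by simp
      then have "fl x s = s - {x}" by (simp add: fl_def)
      also have "\<dots> = T' \<union> Z''" using True Z T' xY by (auto simp: Z''_def T''_def)
      finally show ?thesis .
    next
      case False
      then have "x \<notin> s" using xs by simp
      then have "fl x s = insert x s" by (simp add: fl_def)
      also have "\<dots> = T' \<union> Z''" using False Z by (auto simp: Z''_def T''_def)
      finally show ?thesis .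
    qed
    moreover have "Z'' \<subseteq> insert x Y" using Z by (auto simp: Z''_def)
    ultimately have "fl x s \<in> C" using subsetD[OF T'(2) cube_mem[of Z'' "insert x Y" T']] by simp
    show "s \<in> ?H" using \<open>s \<in> C\<close> \<open>fl x s \<in> C\<close> xs by simp
  qed
  ultimately show "\<exists>T. T \<subseteq> X - Y \<and> cube T Y \<subseteq> ?H" by (intro exI[of _ T''] conjI)
qed



lemma fiber_ample:
  assumes "finite F" "F \<subseteq> X" "ample X C"
  shows "ample X {s\<in>C. \<forall>y\<in>F. (y\<in>s) = (y\<in>c)}"
  using assms
proof (induction F rule: finite_induct)
  case empty then show ?case by simp
next
  case (insert x F)
  have e: "{s\<in>C. \<forall>y\<in>insert x F. (y\<in>s) = (y\<in>c)} = {s\<in>{s\<in>C. \<forall>y\<in>F. (y\<in>s) = (y\<in>c)}. (x\<in>s) = (x\<in>c)}"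
    by auto
  have "ample X {s\<in>C. \<forall>y\<in>F. (y\<in>s) = (y\<in>c)}" using insert.IH insert.prems by simp
  moreover have "x \<in> X" using insert.prems by simp
  ultimately show ?case unfolding e by (rule half_ample)
qed

lemma sd_inj: "c - u \<union> (u - c) = c - t \<union> (t - c) \<Longrightarrow> u = t"
proof (rule set_eqI)
  fix x assume h: "c - u \<union> (u - c) = c - t \<union> (t - c)"
  then have "x \<in> c - u \<union> (u - c) \<longleftrightarrow> x \<in> c - t \<union> (t - c)" by simp
  then show "x \<in> u \<longleftrightarrow> x \<in> t" by (cases "x \<in> c") auto
qed

lemma sd_inj2: "u - t \<union> (t - u) = c - t \<union> (t - c) \<Longrightarrow> u = c"
proof (rule set_eqI)
  fix x assume h: "u - t \<union> (t - u) = c - t \<union> (t - c)"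
  then have "x \<in> u - t \<union> (t - u) \<longleftrightarrow> x \<in> c - t \<union> (t - c)" by simp
  then show "x \<in> u \<longleftrightarrow> x \<in> c" by (cases "x \<in> t") auto
qed

lemma B_fiber:
  assumes "C \<subseteq> Pow X" "c \<in> C" "t \<in> C"
  shows "C \<inter> B c t = {s\<in>C. \<forall>y\<in>X - (c - t \<union> (t - c)). (y\<in>s) = (y\<in>c)}"
proof (rule set_eqI)
  fix s show "s \<in> C \<inter> B c t \<longleftrightarrow> s \<in> {s\<in>C. \<forall>y\<in>X - (c - t \<union> (t - c)). (y\<in>s) = (y\<in>c)}"
  proof
    assume "s \<in> C \<inter> B c t" then show "s \<in> {s\<in>C. \<forall>y\<in>X - (c - t \<union> (t - c)). (y\<in>s) = (y\<in>c)}"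
      unfolding B_def by auto
  next
    assume h: "s \<in> {s\<in>C. \<forall>y\<in>X - (c - t \<union> (t - c)). (y\<in>s) = (y\<in>c)}"
    have "s \<subseteq> X" "c \<subseteq> X" "t \<subseteq> X" using h assms by auto
    then show "s \<in> C \<inter> B c t" using h unfolding B_def by auto
  qed
qed

lemma conn:
  "finite X \<Longrightarrow> ample X C \<Longrightarrow> c \<in> C \<Longrightarrow> t \<in> C \<Longrightarrow> (adj (C \<inter> B c t))\<^sup>*\<^sup>* c t"
proof (induction "card (c - t \<union> (t - c))" arbitrary: C c t rule: less_induct)
  case less
  let ?Q = "C \<inter> B c t"
  have CX: "C \<subseteq> Pow X" using less.prems(2) by (rule ampleD2)
  have "finite (X - (c - t \<union> (t - c)))" using less.prems(1) by simp
  then have "ample X {s\<in>C. \<forall>y\<in>X - (c - t \<union> (t - c)). (y\<in>s) = (y\<in>c)}"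
    using fiber_ample less.prems(2) by blast
  then have ampQ: "ample X ?Q" using B_fiber[OF CX less.prems(3,4)] by simp
  have cQ: "c \<in> ?Q" "t \<in> ?Q" using less.prems by (auto simp: B_def)
  have fin: "finite (c - t \<union> (t - c))"
  proof -
    have "c - t \<union> (t - c) \<subseteq> X" using CX less.prems(3,4) by auto
    then show ?thesis using less.prems(1) finite_subset by blast
  qed
  show ?case
  proof (cases "\<exists>u\<in>?Q. u \<noteq> c \<and> u \<noteq> t")
    case True
    then obtain u where u: "u \<in> ?Q" "u \<noteq> c" "u \<noteq> t" by blast
    have s1: "c - u \<union> (u - c) \<subset> c - t \<union> (t - c)"
    proof
      show "c - u \<union> (u - c) \<subseteq> c - t \<union> (t - c)" using u(1) by (auto simp: B_def)
      show "c - u \<union> (u - c) \<noteq> c - t \<union> (t - c)"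
      proof
        assume "c - u \<union> (u - c) = c - t \<union> (t - c)"
        then have "u = t" by (rule sd_inj)
        then show False using u by simp
      qed
    qed
    have s2: "u - t \<union> (t - u) \<subset> c - t \<union> (t - c)"
    proof
      show "u - t \<union> (t - u) \<subseteq> c - t \<union> (t - c)" using u(1) by (auto simp: B_def)
      show "u - t \<union> (t - u) \<noteq> c - t \<union> (t - c)"
      proof
        assume "u - t \<union> (t - u) = c - t \<union> (t - c)"
        then have "u = c" by (rule sd_inj2)
        then show False using u by simp
      qed
    qed
    have "(adj (?Q \<inter> B c u))\<^sup>*\<^sup>* c u"
      using less.hyps[OF psubset_card_mono[OF fin s1] less.prems(1) ampQ cQ(1) u(1)] .
    then have p1: "(adj ?Q)\<^sup>*\<^sup>* c u" by (rule adj_mono[rotated]) auto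
    have "(adj (?Q \<inter> B u t))\<^sup>*\<^sup>* u t"
      using less.hyps[OF psubset_card_mono[OF fin s2] less.prems(1) ampQ u(1) cQ(2)] .
    then have p2: "(adj ?Q)\<^sup>*\<^sup>* u t" by (rule adj_mono[rotated]) auto
    show ?thesis using p1 p2 by (rule rtranclp_trans)
  next
    case False
    then have Qs: "?Q \<subseteq> {c, t}" by blast
    show ?thesis
    proof (cases "c = t")
      case True then show ?thesis by simp
    next
      case False
      then obtain e where e: "e \<in> c - t \<union> (t - c)" by blast
      have eX: "e \<in> X" using e CX less.prems(3,4) by auto
      have sh: "shatters ?Q {e}"
      proof (rule shattersI)
        fix W assume W: "W \<subseteq> {e}"
        then have W2: "W = {} \<or> W = {e}" by blast
        show "\<exists>q\<in>?Q. q \<inter> {e} = W"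
        proof (cases "e \<in> c")
          case True
          then have "c \<inter> {e} = {e}" "t \<inter> {e} = {}" using e by auto
          then show ?thesis using W2 cQ by blast
        next
          case False
          then have "t \<inter> {e} = {e}" "c \<inter> {e} = {}" using e by auto
          then show ?thesis using W2 cQ by blast
        qed
      qed
      have "{e} \<subseteq> X" using eX by simp
      then obtain T where T: "T \<subseteq> X - {e}" "cube T {e} \<subseteq> ?Q" using ampleD[OF ampQ _ sh] by blast
      have "T \<in> cube T {e}" using cube_mem[of "{}" "{e}" T] by simp
      moreover have "insert e T \<in> cube T {e}" using cube_mem[of "{e}" "{e}" T] by simp
      ultimately have "T \<in> {c,t}" "insert e T \<in> {c,t}" using T(2) Qs by blast+
      moreover have "e \<notin> T" using T(1) by blast
      ultimately have "(c = T \<and> t = insert e T) \<or> (c = insert e T \<and> t = T)"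
        using False by blast
      then have "t = fl e c"
      proof
        assume "c = T \<and> t = insert e T" then show ?thesis using \<open>e \<notin> T\<close> by (simp add: fl_def)
      next
        assume "c = insert e T \<and> t = T" then show ?thesis using \<open>e \<notin> T\<close> by (simp add: fl_def)
      qed
      then have "adj ?Q c t" using cQ by (auto simp: adj_fl)
      then show ?thesis by simp
    qed
  qed
qed



lemma fl_mem: "x \<in> fl e p \<longleftrightarrow> (x = e \<and> x \<notin> p) \<or> (x \<noteq> e \<and> x \<in> p)"
  by (auto simp: fl_def)

lemma sd2: "f \<noteq> e \<Longrightarrow> p - fl e (fl f p) \<union> (fl e (fl f p) - p) = {e, f}"
  by (rule set_eqI) (auto simp add: fl_mem)

lemma inB2: "f \<noteq> e \<Longrightarrow> fl e p \<in> B p (fl e (fl f p))"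
  unfolding B_def by (auto simp: fl_mem)

lemma card_sd_1:
  assumes "finite (z \<union> z')" "x \<in> B z z'" "x \<noteq> z" "x \<noteq> z'" "card (z - z' \<union> (z' - z)) = 2"
  shows "card (z - x \<union> (x - z)) = 1"
proof -
  have sub: "z - x \<union> (x - z) \<subseteq> z - z' \<union> (z' - z)" using assms(2) by (auto simp: B_def)
  have ne: "z - x \<union> (x - z) \<noteq> z - z' \<union> (z' - z)"
  proof
    assume "z - x \<union> (x - z) = z - z' \<union> (z' - z)"
    then have "x = z'" by (rule sd_inj)
    then show False using assms(4) by simp
  qed
  have ne2: "z - x \<union> (x - z) \<noteq> {}"
  proof
    assume "z - x \<union> (x - z) = {}"
    then have "x = z" by blast
    then show False using assms(3) by simp
  qed
  have fin: "finite (z - z' \<union> (z' - z))" using assms(1) by (rule finite_subset[rotated]) auto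
  have ps: "z - x \<union> (x - z) \<subset> z - z' \<union> (z' - z)" using sub ne by (rule psubsetI)
  have "card (z - x \<union> (x - z)) < 2"
    using psubset_card_mono[OF fin ps] assms(5) by simp
  moreover have "card (z - x \<union> (x - z)) \<noteq> 0"
    using ne2 finite_subset[OF sub fin] by simp
  ultimately show ?thesis by linarith
qed

lemma lcD: "locally_convex_in C' C \<Longrightarrow> c \<in> C' \<Longrightarrow> c' \<in> C' \<Longrightarrow> card (c - c' \<union> (c' - c)) = 2 \<Longrightarrow> x \<in> B c c' \<Longrightarrow> x \<in> C \<Longrightarrow> x \<in> C'"
  unfolding locally_convex_in_def by blast

lemma cvD: "convex_in C' C \<Longrightarrow> c \<in> C' \<Longrightarrow> c' \<in> C' \<Longrightarrow> x \<in> B c c' \<Longrightarrow> x \<in> C \<Longrightarrow> x \<in> C'"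
  unfolding convex_in_def by blast

lemma claimH:
  assumes fin: "finite X" and amp: "ample X C" and sub: "C' \<subseteq> C"
    and gc: "graph_connected C'" and lc: "locally_convex_in C' C"
    and IH: "\<And>C''. card C'' < card C' \<Longrightarrow> C'' \<subseteq> C \<Longrightarrow> graph_connected C'' \<Longrightarrow> locally_convex_in C'' C \<Longrightarrow> convex_in C'' C"
    and s: "s \<in> C'" "fl e s \<in> C" "fl e s \<notin> C'"
    and y: "y \<in> C'" "(e \<in> y) \<noteq> (e \<in> s)"
  shows False
proof -
  have CX: "C \<subseteq> Pow X" using amp by (rule ampleD2)
  have finC': "finite C'"
  proof -
    have "C' \<subseteq> Pow X" using sub CX by blast
    moreover have "finite (Pow X)" using fin by simp
    ultimately show ?thesis by (rule finite_subset)
  qed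
  define S where "S = {z\<in>C'. (e\<in>z) = (e\<in>s)}"
  define K where "K = {z. (adj S)\<^sup>*\<^sup>* s z}"
  have sS: "s \<in> S" using s(1) by (simp add: S_def)
  have KS: "K \<subseteq> S"
  proof
    fix z assume "z \<in> K"
    then have "(adj S)\<^sup>*\<^sup>* s z" by (simp add: K_def)
    then show "z \<in> S"
      by (induction rule: rtranclp_induct) (auto simp: adj_def sS)
  qed
  have sK: "s \<in> K" by (simp add: K_def)
  have Kstep: "w \<in> K" if "z \<in> K" "adj S z w" for z w
    using that by (auto simp: K_def intro: rtranclp.rtrancl_into_rtrancl)
  have gen: "z \<in> K \<or> (\<exists>a\<in>K. fl e a \<in> C')" if "(adj C')\<^sup>*\<^sup>* s z" for z
    using that
  proof (induction rule: rtranclp_induct)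
    case base show ?case using sK by blast
  next
    case (step z w)
    from step.IH show ?case
    proof
      assume zK: "z \<in> K"
      obtain f where w: "w \<in> C'" "w = fl f z" using step.hyps(2) by (auto simp: adj_fl)
      have zS: "z \<in> S" using zK KS by blast
      show ?case
      proof (cases "f = e")
        case True then show ?thesis using zK w by blast
      next
        case False
        then have "(e \<in> w) = (e \<in> z)" using w(2) by (auto simp: fl_def)
        then have "w \<in> S" using zS w(1) by (simp add: S_def)
        then have "adj S z w" using zS w(2) by (auto simp: adj_fl)
        then have "w \<in> K" using zK Kstep by blast
        then show ?thesis by blast
      qed
    qed blast
  qed
  have "(adj C')\<^sup>*\<^sup>* s y" using gc s(1) y(1) by (simp add: graph_connected_def)
  moreover have yK: "y \<notin> K" using y KS by (auto simp: S_def)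
  ultimately obtain a where a: "a \<in> K" "fl e a \<in> C'" using gen by blast
  have KC': "K \<subseteq> C'" using KS by (auto simp: S_def)
  have cardK: "card K < card C'"
  proof (rule psubset_card_mono[OF finC'])
    show "K \<subset> C'" using KC' y(1) yK by blast
  qed
  have toK: "(adj K)\<^sup>*\<^sup>* s z" if "(adj S)\<^sup>*\<^sup>* s z" for z
    using that
  proof (induction rule: rtranclp_induct)
    case base show ?case by simp
  next
    case (step z w)
    have zK: "z \<in> K" using step.hyps(1) by (simp add: K_def)
    then have wK: "w \<in> K" using step.hyps(2) Kstep by blast
    have "adj K z w" using step.hyps(2) zK wK by (simp add: adj_def)
    with step.IH show ?case by (rule rtranclp.rtrancl_into_rtrancl)
  qed
  have gcK: "graph_connected K"
    unfolding graph_connected_def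
  proof (intro ballI)
    fix z z' assume "z \<in> K" "z' \<in> K"
    then have "(adj K)\<^sup>*\<^sup>* s z" "(adj K)\<^sup>*\<^sup>* s z'" using toK by (auto simp: K_def)
    then show "(adj K)\<^sup>*\<^sup>* z z'" using rt_sym rtranclp_trans by metis
  qed
  have lcK: "locally_convex_in K C"
    unfolding locally_convex_in_def
  proof (intro ballI impI subsetI)
    fix z z' x assume z: "z \<in> K" "z' \<in> K" "card (z - z' \<union> (z' - z)) = 2" "x \<in> B z z' \<inter> C"
    have zC': "z \<in> C'" "z' \<in> C'" using z(1,2) KC' by blast+
    have xC': "x \<in> C'" using lcD[OF lc zC' z(3)] z(4) by blast
    have side: "(e\<in>z) = (e\<in>s)" "(e\<in>z') = (e\<in>s)" using z(1,2) KS by (auto simp: S_def)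
    have "(e \<in> x) = (e \<in> s)"
    proof (cases "e \<in> s")
      case True
      then have "e \<in> z \<inter> z'" using side by simp
      then show ?thesis using z(4) True by (auto simp: B_def)
    next
      case False
      then have "e \<notin> z \<union> z'" using side by simp
      then show ?thesis using z(4) False by (auto simp: B_def)
    qed
    then have xS: "x \<in> S" using xC' by (simp add: S_def)
    show "x \<in> K"
    proof (cases "x = z \<or> x = z'")
      case True then show ?thesis using z by blast
    next
      case False
      have "z \<subseteq> X" "z' \<subseteq> X" using zC' sub CX by blast+
      then have "z \<union> z' \<subseteq> X" by blast
      then have fzz: "finite (z \<union> z')" using fin by (rule finite_subset)
      have xzz: "x \<noteq> z" "x \<noteq> z'" "x \<in> B z z'" using False z(4) by auto
      have "card (z - x \<union> (x - z)) = 1" using card_sd_1[OF fzz xzz(3) xzz(1) xzz(2) z(3)] .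
      then have "adj S z x" using z(1) KS xS by (auto simp: adj_def)
      then show "x \<in> K" using z(1) Kstep by blast
    qed
  qed
  have cvK: "convex_in K C" using IH[OF cardK _ gcK lcK] KC' sub by blast
  define R where "R = {p\<in>C. (e\<in>p) = (e\<in>s) \<and> fl e p \<in> C}"
  have eX: "e \<in> X"
  proof (cases "e \<in> s")
    case True then show ?thesis using s(1) sub CX by blast
  next
    case False then have "e \<in> fl e s" by (simp add: fl_def)
    then show ?thesis using s(2) CX by blast
  qed
  have ampR: "ample X R" unfolding R_def by (rule red_ample[OF amp eX])
  have sR: "s \<in> R" using s sub by (auto simp: R_def)
  have aS: "a \<in> S" using a(1) KS by blast
  have aR: "a \<in> R" using aS a(2) sub by (auto simp: R_def S_def)
  have path: "(adj (R \<inter> B s a))\<^sup>*\<^sup>* s a" using conn[OF fin ampR sR aR] .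
  have RBK: "R \<inter> B s a \<subseteq> K"
  proof -
    have "B s a \<inter> C \<subseteq> K" using cvD[OF cvK sK a(1)] by blast
    moreover have "R \<subseteq> C" by (auto simp: R_def)
    ultimately show ?thesis by blast
  qed
  have flC': "fl e p \<in> C'" if "(adj (R \<inter> B s a))\<^sup>*\<^sup>* p a" for p
    using that
  proof (induction rule: converse_rtranclp_induct)
    case base show ?case using a(2) .
  next
    case (step p q)
    from step.hyps(1) obtain f where pq: "p \<in> R \<inter> B s a" "q \<in> R \<inter> B s a" "q = fl f p"
      by (auto simp: adj_fl)
    have pC': "p \<in> C'" using pq(1) RBK KC' by blast
    have sides: "(e\<in>p) = (e\<in>s)" "(e\<in>q) = (e\<in>s)" using pq(1,2) by (auto simp: R_def)
    have fe: "f \<noteq> e"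
    proof
      assume "f = e"
      then have "(e \<in> q) \<noteq> (e \<in> p)" using pq(3) by (auto simp: fl_def)
      then show False using sides by simp
    qed
    have "card (p - fl e q \<union> (fl e q - p)) = 2" using sd2[OF fe, of p] pq(3) fe by simp
    moreover have "fl e p \<in> B p (fl e q) \<inter> C" using inB2[OF fe, of p] pq(1,3) by (auto simp: R_def)
    ultimately show "fl e p \<in> C'" using lcD[OF lc pC' step.IH] by blast
  qed
  have "fl e s \<in> C'" using flC' path .
  then show False using s(3) by contradiction
qed

lemma main_lc:
  assumes fin: "finite X" and amp: "ample X C"
  shows "C' \<subseteq> C \<Longrightarrow> graph_connected C' \<Longrightarrow> locally_convex_in C' C \<Longrightarrow> convex_in C' C"
proof (induction "card C'" arbitrary: C' rule: less_induct)
  case less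
  show ?case unfolding convex_in_def
  proof (intro ballI subsetI)
    fix c d t assume cd: "c \<in> C'" "d \<in> C'" "t \<in> B c d \<inter> C"
    have cC: "c \<in> C" "t \<in> C" using cd less.prems(1) by auto
    have path: "(adj (C \<inter> B c t))\<^sup>*\<^sup>* c t" using conn[OF fin amp cC] .
    have Bsub: "B c t \<subseteq> B c d" using cd(3) by (auto simp: B_def)
    have inC': "z \<in> C'" if "(adj (C \<inter> B c t))\<^sup>*\<^sup>* c z" for z
      using that
    proof (induction rule: rtranclp_induct)
      case base show ?case using cd(1) .
    next
      case (step y z)
      obtain f where yz: "y \<in> C \<inter> B c t" "z \<in> C \<inter> B c t" "z = fl f y"
        using step.hyps(2) by (auto simp: adj_fl)
      show "z \<in> C'"
      proof (rule ccontr)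
        assume zn: "z \<notin> C'"
        have yB: "y \<in> B c d" "z \<in> B c d" using yz(1,2) Bsub by auto
        have "\<exists>w\<in>{c,d}. (f \<in> w) \<noteq> (f \<in> y)"
        proof (cases "f \<in> y")
          case True
          then have "f \<notin> z" using yz(3) by (simp add: fl_def)
          then have "f \<notin> c \<inter> d" using yB(2) by (auto simp: B_def)
          then show ?thesis using True by blast
        next
          case False
          then have "f \<in> z" using yz(3) by (simp add: fl_def)
          then have "f \<in> c \<union> d" using yB(2) by (auto simp: B_def)
          then show ?thesis using False by blast
        qed
        then obtain w where w: "w \<in> C'" "(f \<in> w) \<noteq> (f \<in> y)" using cd(1,2) by blast
        have "fl f y \<in> C" "fl f y \<notin> C'" using yz zn by auto
        then show False
          using claimH[OF fin amp less.prems(1) less.prems(2) less.prems(3) less.hyps step.IH _ _ w] by blast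
      qed
    qed
    show "t \<in> C'" using inC' path .
  qed
qed

theorem lemma4p8:
  fixes X :: "'a set" and C C' :: "'a set set"
  assumes "finite X"
    and "ample X C"
    and "C' \<subseteq> C"
    and "graph_connected C'"
  shows "convex_in C' C \<longleftrightarrow> locally_convex_in C' C"
proof
  assume "convex_in C' C" then show "locally_convex_in C' C"
    unfolding convex_in_def locally_convex_in_def by blast
next
  assume "locally_convex_in C' C" then show "convex_in C' C"
    using main_lc[OF assms(1,2) assms(3,4)] by blast
qed

end
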